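(* Let $q$ be a real-valued function on $[0,\infty)$ which extends to a function $q(\xi)$ analytic (regular) in the sector $S=\{\xi\in\mathbb{C}:\ \xi\neq 0,\ -\theta_0<\arg\xi<\theta_0\}$, for some $\theta_0$ with $0<\theta_0<\pi$, and suppose there are constants $\gamma>1$ and $k$ such that $|q(\xi)|\le k|\xi|^{-\gamma}$ as $|\xi|\to\infty$ with $\xi\in S$. For $\operatorname{Im} z>0$ and $t\in S$ put $Q(t)=\frac{1}{2}\,i\,q(t)/z$ and $K(s,z)=\begin{pmatrix}1&1\\ -e^{2isz}&-e^{2isz}\end{pmatrix}$. Define vector functions $W_n(\xi,z)=(u_n(\xi,z),v_n(\xi,z))^T$ for $\xi\in S$ and $\operatorname{Im} z>0$ by $W_0(\xi,z)=e_1=(1,0)^T$ and $$W_n(\xi,z)=\int_0^\infty Q(\xi+s)\,K(s,z)\,W_{n-1}(\xi+s,z)\,ds\qquad(n\ge 1).$$ Then, writing $|W_n|=|u_n|+|v_n|$, for all $\xi\in S$, $\operatorname{Im} z>0$ and $n\ge 0$, $$|W_n(\xi,z)|\le \frac{1}{n!}\left(2\int_0^\infty |Q(\xi+s)|\,ds\right)^n,$$ and $W_n(\xi,z)$ is a regular (analytic) function of $\xi$ in $S$.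
   Context: Here $\xi+s$ with $s\ge0$ lies in $S$ whenever $\xi\in S$. The quantity $Q$ depends on $z$ through the factor $1/z$. *)

theory Defs
  imports "HOL-Analysis.Analysis"
begin

definition sector :: "real \<Rightarrow> complex set" where
  "sector \<theta>0 = {\<xi>. \<xi> \<noteq> 0 \<and> - \<theta>0 < Arg \<xi> \<and> Arg \<xi> < \<theta>0}"

definition Qf :: "(complex \<Rightarrow> complex) \<Rightarrow> complex \<Rightarrow> complex \<Rightarrow> complex" where
  "Qf q z t = (1/2) * \<i> * q t / z"

definition Kmul :: "real \<Rightarrow> complex \<Rightarrow> complex \<times> complex \<Rightarrow> complex \<times> complex" where
  "Kmul s z w = (1 * fst w + 1 * snd w,
                 (- exp (2 * \<i> * of_real s * z)) * fst w + (- exp (2 * \<i> * of_real s * z)) * snd w)"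

fun W :: "(complex \<Rightarrow> complex) \<Rightarrow> complex \<Rightarrow> nat \<Rightarrow> complex \<Rightarrow> complex \<times> complex" where
  "W q z 0 \<xi> = (1, 0)"
| "W q z (Suc n) \<xi> =
     ((LINT s:{0..}|lborel. Qf q z (\<xi> + of_real s) * fst (Kmul s z (W q z n (\<xi> + of_real s)))),
      (LINT s:{0..}|lborel. Qf q z (\<xi> + of_real s) * snd (Kmul s z (W q z n (\<xi> + of_real s)))))"

end

theory Submission
  imports Defs "HOL-Complex_Analysis.Complex_Analysis"
begin

lemma cos_Arg_aux: "z \<noteq> 0 \<Longrightarrow> cmod z * cos (Arg z) = Re z"
  using Arg_eq [of z] by (metis Re_exp exp_Ln norm_exp_eq_Re Arg_def)

lemma ratio_mono_aux:
  fixes x b s :: real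
  assumes "s \<ge> 0" "A > 0" "B > 0" "A^2 = x^2 + b^2" "B^2 = (x+s)^2 + b^2"
  shows "x / A \<le> (x + s) / B"
proof -
  have sq1: "(x * B)^2 = x^2 * (x+s)^2 + x^2 * b^2"
  proof -
    have "(x * B)^2 = x^2 * B^2" by (rule power_mult_distrib)
    also have "\<dots> = x^2 * ((x+s)^2 + b^2)" using assms(5) by simp
    also have "\<dots> = x^2 * (x+s)^2 + x^2 * b^2" by algebra
    finally show ?thesis .
  qed
  have sq2: "((x + s) * A)^2 = x^2 * (x+s)^2 + (x+s)^2 * b^2"
  proof -
    have "((x + s) * A)^2 = (x+s)^2 * A^2" by (rule power_mult_distrib)
    also have "\<dots> = (x+s)^2 * (x^2 + b^2)" using assms(4) by simp
    also have "\<dots> = x^2 * (x+s)^2 + (x+s)^2 * b^2" by algebra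
    finally show ?thesis .
  qed
  note sq = sq1 sq2
  have key: "x * B \<le> (x + s) * A"
  proof (cases "x \<le> 0 \<and> 0 \<le> x + s")
    case True
    then have "x * B \<le> 0" using assms(3) by (simp add: mult_nonpos_nonneg)
    moreover have "0 \<le> (x + s) * A" using True assms(2) by simp
    ultimately show ?thesis by (rule order_trans)
  next
    case False
    then consider "x > 0" | "x + s < 0" by linarith
    then show ?thesis
    proof cases
      case 1
      have "x^2 \<le> (x+s)^2" using 1 assms(1) by (intro power_mono) auto
      then have "x^2 * b^2 \<le> (x+s)^2 * b^2" by (rule mult_right_mono) simp
      then have "(x*B)^2 \<le> ((x+s)*A)^2" unfolding sq by simp
      then show ?thesis
        by (rule power2_le_imp_le) (use 1 assms in \<open>intro mult_nonneg_nonneg; auto\<close>)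
    next
      case 2
      have "(-(x+s))^2 \<le> (-x)^2" using 2 assms(1) by (intro power_mono) auto
      then have "(x+s)^2 \<le> x^2" by (metis power2_minus)
      then have "(x+s)^2 * b^2 \<le> x^2 * b^2" by (rule mult_right_mono) simp
      moreover have "((-(x+s))*A)^2 = ((x+s)*A)^2" by (metis minus_mult_left power2_minus)
      moreover have "((-x)*B)^2 = (x*B)^2" by (metis minus_mult_left power2_minus)
      ultimately have "((-(x+s))*A)^2 \<le> ((-x)*B)^2" using sq1 sq2 by linarith
      then have "(-(x+s))*A \<le> (-x)*B"
        by (rule power2_le_imp_le) (use 2 assms in \<open>intro mult_nonneg_nonneg; auto\<close>)
      then have "- ((x+s)*A) \<le> - (x*B)" by (simp only: minus_mult_left)
      then show ?thesis by (simp only: neg_le_iff_le)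
    qed
  qed
  then show ?thesis using assms by (simp add: divide_simps mult.commute)
qed

lemma sector_add:
  assumes "\<theta>0 < pi" "\<xi> \<in> sector \<theta>0" "s \<ge> 0"
  shows "\<xi> + of_real s \<in> sector \<theta>0"
proof -
  have xi0: "\<xi> \<noteq> 0" and a1: "-\<theta>0 < Arg \<xi>" "Arg \<xi> < \<theta>0" using assms(2) by (auto simp: sector_def)
  define w where "w = \<xi> + of_real s"
  have w0: "w \<noteq> 0"
  proof
    assume "w = 0"
    then have e: "\<xi> = of_real (-s)" by (simp add: w_def add_eq_0_iff)
    with xi0 have "s \<noteq> 0" by auto
    have "Arg (complex_of_real (-s)) = pi" using \<open>s \<noteq> 0\<close> assms(3) by (subst Arg_of_real) auto
    with e have "Arg \<xi> = pi" by simp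
    with a1 assms(1) show False by simp
  qed
  have c1: "cos (Arg \<xi>) = Re \<xi> / cmod \<xi>" using cos_Arg_aux[OF xi0] xi0 by (simp add: field_simps)
  have c2: "cos (Arg w) = Re w / cmod w" using cos_Arg_aux[OF w0] w0 by (simp add: field_simps)
  have "Re \<xi> / cmod \<xi> \<le> (Re \<xi> + s) / cmod w"
    by (rule ratio_mono_aux[where b="Im \<xi>"]) (use assms(3) xi0 w0 in \<open>auto simp: cmod_power2 w_def\<close>)
  then have "cos \<bar>Arg \<xi>\<bar> \<le> cos \<bar>Arg w\<bar>" using c1 c2 by (simp add: w_def)
  then have "\<bar>Arg w\<bar> \<le> \<bar>Arg \<xi>\<bar>"
  proof (subst (asm) cos_mono_le_eq)
    show "\<bar>Arg \<xi>\<bar> \<le> pi" "\<bar>Arg w\<bar> \<le> pi"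
      using mpi_less_Arg[of \<xi>] Arg_le_pi[of \<xi>] mpi_less_Arg[of w] Arg_le_pi[of w] by linarith+
  qed auto
  moreover have "\<bar>Arg \<xi>\<bar> < \<theta>0" using a1 by (simp add: abs_less_iff)
  ultimately have "-\<theta>0 < Arg w \<and> Arg w < \<theta>0"
    using abs_ge_minus_self[of "Arg w"] abs_ge_self[of "Arg w"] by linarith
  then have "w \<in> sector \<theta>0" using w0 unfolding sector_def by simp
  then show ?thesis by (simp add: w_def)
qed

lemma open_sector:
  assumes "\<theta>0 < pi"
  shows "open (sector \<theta>0)"
proof -
  have "sector \<theta>0 = (-\<real>\<^sub>\<le>\<^sub>0) \<inter> Arg -` {-\<theta>0<..<\<theta>0}"
  proof (intro equalityI subsetI)
    fix x assume x: "x \<in> sector \<theta>0"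
    have "x \<notin> \<real>\<^sub>\<le>\<^sub>0"
    proof
      assume "x \<in> \<real>\<^sub>\<le>\<^sub>0"
      then obtain r where "x = of_real r" "r \<le> 0" by (auto elim: nonpos_Reals_cases)
      then show False using x assms by (auto simp: sector_def Arg_of_real split: if_splits)
    qed
    then show "x \<in> (-\<real>\<^sub>\<le>\<^sub>0) \<inter> Arg -` {-\<theta>0<..<\<theta>0}" using x by (auto simp: sector_def)
  next
    fix x assume "x \<in> (-\<real>\<^sub>\<le>\<^sub>0) \<inter> Arg -` {-\<theta>0<..<\<theta>0}"
    then show "x \<in> sector \<theta>0" by (auto simp: sector_def)
  qed
  also have "open \<dots>"
  proof -
    have "open (-\<real>\<^sub>\<le>\<^sub>0 :: complex set)" by auto
    from continuous_on_Arg[unfolded continuous_on_open_vimage[OF this]]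
    have "open (Arg -` {-\<theta>0<..<\<theta>0} \<inter> -\<real>\<^sub>\<le>\<^sub>0)"
      using open_greaterThanLessThan by blast
    then have "open (-\<real>\<^sub>\<le>\<^sub>0 \<inter> Arg -` {-\<theta>0<..<\<theta>0})" by (simp only: Int_commute)
    then show ?thesis by simp
  qed
  finally show ?thesis .
qed


lemma shift_int:
  fixes a :: "real \<Rightarrow> real"
  shows "(LINT t:{0..}|lborel. a (s + t)) = (LINT t:{s..}|lborel. a t)"
proof -
  have "(LINT t:{s..}|lborel. a t) = (\<integral>x. indicator {s..} x *\<^sub>R a x \<partial>lborel)"
    by (simp add: set_lebesgue_integral_def)
  also have "\<dots> = \<bar>1\<bar> *\<^sub>R (\<integral>x. indicator {s..} (s + 1 * x) *\<^sub>R a (s + 1 * x) \<partial>lborel)"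
    by (rule lborel_integral_real_affine) simp
  also have "\<dots> = (LINT t:{0..}|lborel. a (s + t))"
    by (simp add: set_lebesgue_integral_def indicator_def)
  finally show ?thesis ..
qed

lemma key_int:
  fixes a :: "real \<Rightarrow> real" and m :: nat
  assumes cont: "continuous_on {0..} a" and nn: "\<And>t. t \<ge> 0 \<Longrightarrow> a t \<ge> 0"
    and int: "set_integrable lborel {0..} a"
  defines "G \<equiv> \<lambda>s. LINT t:{0..}|lborel. a (s + t)"
  shows "set_integrable lborel {0..} (\<lambda>s. 2 * a s * (2 * G s)^m / fact m)"
    and "(LINT s:{0..}|lborel. 2 * a s * (2 * G s)^m / fact m) = (2 * G 0)^(Suc m) / fact (Suc m)"
proof -
  define C where "C = (LINT t:{0..}|lborel. a t)"
  define I where "I = (\<lambda>s::real. LBINT t=ereal 0..ereal s. a t)"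
  have intsub: "set_integrable lborel A a" if "A \<subseteq> {0..}" "A \<in> sets borel" for A
    by (rule set_integrable_subset[OF int]) (use that in auto)
  have GI: "G s = C - I s" if "s \<ge> 0" for s
  proof -
    have 1: "G s = (LINT t:{s..}|lborel. a t)" by (simp add: G_def shift_int)
    have un: "{0..<s} \<union> {s..} = {0::real..}" using that by auto
    have 2: "C = (LINT t:{0..<s}|lborel. a t) + (LINT t:{s..}|lborel. a t)"
      unfolding C_def un[symmetric] using that by (intro set_integral_Un intsub) auto
    have 3: "I s = (LINT t:{0..<s}|lborel. a t)" unfolding I_def using that by (simp add: interval_integral_Ico)
    show ?thesis using 1 2 3 by simp
  qed
  have Gnn: "G s \<ge> 0" if "s \<ge> 0" for s
    unfolding G_def set_lebesgue_integral_def using that by (intro Bochner_Integration.integral_nonneg) (auto simp: indicator_def nn)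
  have Ider: "(I has_real_derivative a x) (at x within {0..b})" if "0 \<le> x" "x \<le> b" for x b
  proof -
    have "continuous_on {0..b} a" by (rule continuous_on_subset[OF cont]) auto
    from interval_integral_FTC2[of 0 0 b a x, OF _ _ this] that
    show ?thesis by (simp add: has_real_derivative_iff_has_vector_derivative I_def)
  qed
  have Ider': "(I has_real_derivative a x) (at x)" if "x > 0" for x
  proof -
    have "x \<in> {0<..<x+1}" using that by simp
    then have "x \<in> interior {0..x+1}" by (simp only: interior_atLeastAtMost_real)
    then have "at x within {0..x+1} = at x" by (rule at_within_interior)
    with Ider[of x "x+1"] that show ?thesis by simp
  qed
  have I0: "I 0 = 0" by (simp add: I_def)
  have Iright: "(I \<longlongrightarrow> 0) (at_right 0)"
  proof -
    have "continuous (at 0 within {0..1}) I" by (rule DERIV_continuous[OF Ider]) auto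
    then have "(I \<longlongrightarrow> I 0) (at 0 within {0..1})" by (simp add: continuous_within)
    then show ?thesis by (simp add: I0 at_within_Icc_at_right)
  qed
  have Itop: "(I \<longlongrightarrow> C) at_top"
  proof -
    have "((\<lambda>b. LINT t:{0..b}|lborel. a t) \<longlongrightarrow> C) at_top"
      unfolding C_def by (rule tendsto_set_lebesgue_integral_at_top[OF _ int]) auto
    moreover have "eventually (\<lambda>b. (LINT t:{0..b}|lborel. a t) = I b) at_top"
      using eventually_ge_at_top[of 0] by eventually_elim (simp add: I_def interval_integral_Icc)
    ultimately show ?thesis by (rule Lim_transform_eventually)
  qed
  define F where "F = (\<lambda>s. - ((2 * (C - I s))^(Suc m)) / fact (Suc m))"
  define f where "f = (\<lambda>s. 2 * a s * (2 * (C - I s))^m / fact m)"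
  have Fder: "DERIV F x :> f x" if "x > 0" for x
  proof -
    have "((\<lambda>s. - ((2 * (C - I s))^(Suc m)) / fact (Suc m)) has_real_derivative
           (- (of_nat (Suc m) * (2 * (C - I x))^m * (2 * (0 - a x))) / fact (Suc m))) (at x)"
      by (intro derivative_eq_intros) (auto simp: Ider'[OF that])
    moreover have "- (of_nat (Suc m) * (2 * (C - I x))^m * (2 * (0 - a x))) / fact (Suc m)
        = 2 * a x * (2 * (C - I x))^m / fact m"
    proof -
      have "fact (Suc m) = (of_nat (Suc m) :: real) * fact m" by simp
      moreover have "(of_nat (Suc m) :: real) \<noteq> 0" "(fact m :: real) \<noteq> 0" by auto
      ultimately show ?thesis by (simp add: field_simps del: fact_Suc of_nat_Suc)
    qed
    ultimately show ?thesis unfolding F_def f_def by metis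
  qed
  have fcont: "isCont f x" if "x > 0" for x
  proof -
    have "isCont a x" using continuous_on_interior[OF cont, of x] that by simp
    moreover have "isCont I x" using DERIV_isCont[OF Ider'[OF that]] .
    ultimately show ?thesis unfolding f_def by (intro continuous_intros) auto
  qed
  have fnn: "f x \<ge> 0" if "x \<ge> 0" for x
    using GI[OF that] Gnn[OF that] nn[OF that] by (simp add: f_def)
  have A: "((F \<circ> real_of_ereal) \<longlongrightarrow> - ((2 * C)^(Suc m)) / fact (Suc m)) (at_right 0)"
    unfolding zero_ereal_def ereal_tendsto_simps F_def
    using Iright by (auto intro!: tendsto_eq_intros)
  have B: "((F \<circ> real_of_ereal) \<longlongrightarrow> 0) (at_left \<infinity>)"
    unfolding ereal_tendsto_simps F_def
    using Itop by (auto intro!: tendsto_eq_intros)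
  have h1: "(0::ereal) < \<infinity>" by simp
  have h2: "\<And>x. 0 < ereal x \<Longrightarrow> ereal x < \<infinity> \<Longrightarrow> DERIV F x :> f x" using Fder by (simp add: zero_ereal_def)
  have h3: "\<And>x. 0 < ereal x \<Longrightarrow> ereal x < \<infinity> \<Longrightarrow> isCont f x" using fcont by (simp add: zero_ereal_def)
  have h4: "AE x in lborel. 0 < ereal x \<longrightarrow> ereal x < \<infinity> \<longrightarrow> 0 \<le> f x"
    by (auto simp: zero_ereal_def fnn intro!: AE_I2)
  note ftc = interval_integral_FTC_nonneg[OF h1 h2 h3 h4 A B]
  have ein: "einterval 0 \<infinity> = {0::real<..}" by (auto simp: einterval_def zero_ereal_def)
  have eqf: "indicator {0..} x *\<^sub>R (2 * a x * (2 * G x)^m / fact m) = indicator {0..} x *\<^sub>R f x" for x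
  proof (cases "0 \<le> x")
    case True then show ?thesis by (simp only: f_def GI[OF True])
  next
    case False then show ?thesis by (simp add: indicator_def)
  qed
  have si: "set_integrable lborel {0..} f"
    using ftc(1) unfolding ein by (subst set_integrable_discrete_difference[where X="{0}"]) auto
  then show "set_integrable lborel {0..} (\<lambda>s. 2 * a s * (2 * G s)^m / fact m)"
    unfolding set_integrable_def eqf .
  have "(LINT s:{0..}|lborel. 2 * a s * (2 * G s)^m / fact m) = (LINT s:{0..}|lborel. f s)"
    unfolding set_lebesgue_integral_def eqf ..
  also have "\<dots> = (LINT s:{0<..}|lborel. f s)"
    by (rule set_integral_discrete_difference[where X="{0}"]) auto
  also have "\<dots> = (2 * C)^(Suc m) / fact (Suc m)"
    using ftc(2) by (simp add: interval_lebesgue_integral_0_infty)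
  also have "C = G 0" by (simp add: G_def C_def)
  finally show "(LINT s:{0..}|lborel. 2 * a s * (2 * G s)^m / fact m) = (2 * G 0)^(Suc m) / fact (Suc m)" .
qed


lemma powr_tail_integrable:
  fixes L \<gamma> :: real
  assumes "L > 0" "\<gamma> > 1"
  shows "set_integrable lborel {L<..} (\<lambda>s. s powr (-\<gamma>))"
proof -
  define F where "F = (\<lambda>x::real. x powr (-\<gamma>+1) / (-\<gamma>+1))"
  have h1: "ereal L < \<infinity>" by simp
  have h2: "\<And>x. ereal L < ereal x \<Longrightarrow> ereal x < \<infinity> \<Longrightarrow> DERIV F x :> x powr (-\<gamma>)"
    unfolding F_def using assms by (auto intro!: derivative_eq_intros)
  have h3: "\<And>x. ereal L < ereal x \<Longrightarrow> ereal x < \<infinity> \<Longrightarrow> isCont (\<lambda>s. s powr (-\<gamma>)) x"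
    using assms by (auto intro!: continuous_intros)
  have h4: "AE x in lborel. ereal L < ereal x \<longrightarrow> ereal x < \<infinity> \<longrightarrow> 0 \<le> x powr (-\<gamma>)"
    by auto
  have A: "((F \<circ> real_of_ereal) \<longlongrightarrow> F L) (at_right (ereal L))"
    unfolding ereal_tendsto_simps F_def using assms by (auto intro!: tendsto_eq_intros)
  have B: "((F \<circ> real_of_ereal) \<longlongrightarrow> 0) (at_left \<infinity>)"
    unfolding ereal_tendsto_simps F_def
    by (intro tendsto_divide_zero tendsto_neg_powr filterlim_ident) (use assms in simp)
  have 1: "set_integrable lborel (einterval L \<infinity>) (\<lambda>s. s powr (-\<gamma>))"
    by (rule interval_integral_FTC_nonneg(1)[OF h1 h2 h3 h4 A B])
  have 2: "einterval (ereal L) \<infinity> = {L<..}" by (auto simp: einterval_def)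
  show ?thesis using 1 unfolding 2 .
qed

lemma majorant:
  fixes q :: "complex \<Rightarrow> complex" and \<theta>0 \<gamma> k R :: real
  assumes "0 < \<theta>0" "\<theta>0 < pi" "continuous_on (sector \<theta>0) q" "\<gamma> > 1"
    and bnd: "\<forall>\<xi>\<in>sector \<theta>0. norm \<xi> \<ge> R \<longrightarrow> norm (q \<xi>) \<le> k * norm \<xi> powr (-\<gamma>)"
    and xi0: "\<xi>0 \<in> sector \<theta>0"
  shows "\<exists>r>0. \<exists>h. cball \<xi>0 r \<subseteq> sector \<theta>0 \<and> set_integrable lborel {0..} h \<and> (\<forall>s. 0 \<le> h s)
     \<and> (\<forall>s t. 0 \<le> s \<longrightarrow> s \<le> t \<longrightarrow> h t \<le> h s)
     \<and> (\<forall>\<zeta>\<in>cball \<xi>0 r. \<forall>s\<ge>0. norm (q (\<zeta> + of_real s)) \<le> h s)"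
proof -
  obtain r where r: "r > 0" "cball \<xi>0 r \<subseteq> sector \<theta>0"
    using open_contains_cball[of "sector \<theta>0"] open_sector[OF assms(2)] xi0 by blast
  define L where "L = 2 * (norm \<xi>0 + r) + 2 * \<bar>R\<bar> + 1"
  have L: "L > 0" unfolding L_def using r(1) by (simp add: add_pos_nonneg add_nonneg_pos)
  define K where "K = (\<lambda>p. fst p + complex_of_real (snd p)) ` (cball \<xi>0 r \<times> {0..L})"
  have Kc: "compact K" unfolding K_def
    by (intro compact_continuous_image compact_Times compact_cball compact_Icc continuous_intros)
  have KS: "K \<subseteq> sector \<theta>0" unfolding K_def using r sector_add[OF assms(2)] by auto
  have "compact (q ` K)" using Kc KS assms(3) by (meson compact_continuous_image continuous_on_subset)
  then obtain B0 where B0: "\<And>x. x \<in> K \<Longrightarrow> norm (q x) \<le> B0"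
    using compact_imp_bounded[of "q ` K"] unfolding bounded_iff by auto
  define C where "C = max 0 (max B0 (\<bar>k\<bar> * (L/2) powr (-\<gamma>)))"
  define h where "h = (\<lambda>s. C * (max s L / L) powr (-\<gamma>))"
  have C0: "C \<ge> 0" by (simp add: C_def)
  have hnn: "\<forall>s. 0 \<le> h s" using C0 by (simp add: h_def)
  have hmono: "\<forall>s t. 0 \<le> s \<longrightarrow> s \<le> t \<longrightarrow> h t \<le> h s"
  proof (intro allI impI)
    fix s t :: real assume "0 \<le> s" "s \<le> t"
    have "(max t L / L) powr (-\<gamma>) \<le> (max s L / L) powr (-\<gamma>)"
      using L \<open>s \<le> t\<close> assms(4) by (intro powr_mono2') (auto simp: divide_right_mono max.coboundedI2)
    then show "h t \<le> h s" unfolding h_def using C0 by (intro mult_left_mono) auto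
  qed
  have hbound: "norm (q (\<zeta> + of_real s)) \<le> h s" if z: "\<zeta> \<in> cball \<xi>0 r" and s: "s \<ge> 0" for \<zeta> s
  proof (cases "s \<le> L")
    case True
    then have "\<zeta> + of_real s \<in> K" unfolding K_def using z s by (auto intro!: image_eqI[of _ _ "(\<zeta>, s)"])
    then have "norm (q (\<zeta> + of_real s)) \<le> B0" by (rule B0)
    also have "\<dots> \<le> C" by (simp add: C_def)
    also have "C = h s" using True L by (simp add: h_def max_def)
    finally show ?thesis .
  next
    case False
    have nz: "norm \<zeta> \<le> norm \<xi>0 + r" using z norm_triangle_ineq2[of \<zeta> \<xi>0] by (auto simp: dist_norm norm_minus_commute)
    have "norm (\<zeta> + of_real s) \<ge> s - norm \<zeta>"
      using norm_triangle_ineq2[of "of_real s" "-\<zeta>"] s by (simp add: algebra_simps)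
    then have big: "norm (\<zeta> + of_real s) \<ge> s / 2" using nz False by (simp add: L_def)
    have "\<zeta> + of_real s \<in> sector \<theta>0" using sector_add[OF assms(2)] r z s by auto
    moreover have "norm (\<zeta> + of_real s) \<ge> R" using big False r(1) norm_ge_zero[of \<xi>0] abs_ge_self[of R] unfolding L_def by argo
    ultimately have "norm (q (\<zeta> + of_real s)) \<le> k * norm (\<zeta> + of_real s) powr (-\<gamma>)" using bnd by auto
    also have "\<dots> \<le> \<bar>k\<bar> * norm (\<zeta> + of_real s) powr (-\<gamma>)" by (intro mult_right_mono) auto
    also have "\<dots> \<le> \<bar>k\<bar> * (s/2) powr (-\<gamma>)"
      using big False L assms(4) by (intro mult_left_mono powr_mono2') auto
    also have "(s/2) powr (-\<gamma>) = (L/2) powr (-\<gamma>) * (s/L) powr (-\<gamma>)"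
    proof -
      have e: "s/2 = (L/2) * (s/L)" using L by (simp add: field_simps)
      have "(s/2) powr (-\<gamma>) = ((L/2) * (s/L)) powr (-\<gamma>)" by (simp only: e[symmetric])
      also have "\<dots> = (L/2) powr (-\<gamma>) * (s/L) powr (-\<gamma>)" using L False by (intro powr_mult)
      finally show ?thesis .
    qed
    also have "\<bar>k\<bar> * ((L/2) powr (-\<gamma>) * (s/L) powr (-\<gamma>)) \<le> C * (s/L) powr (-\<gamma>)"
    proof -
      have "\<bar>k\<bar> * (L/2) powr (-\<gamma>) \<le> C" by (simp add: C_def)
      then show ?thesis by (simp add: mult.assoc[symmetric] mult_right_mono)
    qed
    also have "\<dots> = h s" using False by (simp add: h_def max_def)
    finally show ?thesis .
  qed
  have hint: "set_integrable lborel {0..} h"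
  proof -
    have "continuous_on {0..L} h" unfolding h_def using L by (intro continuous_intros) auto
    then have i1: "set_integrable lborel {0..L} h" by (rule borel_integrable_atLeastAtMost')
    have "set_integrable lborel {L<..} (\<lambda>s. (C / L powr (-\<gamma>)) * s powr (-\<gamma>))"
      using powr_tail_integrable[OF L assms(4)] by simp
    moreover have "set_integrable lborel {L<..} (\<lambda>s. (C / L powr (-\<gamma>)) * s powr (-\<gamma>))
        = set_integrable lborel {L<..} h"
      using L by (intro set_integrable_cong) (auto simp: h_def max_def powr_divide)
    ultimately have i2: "set_integrable lborel {L<..} h" by simp
    have "set_integrable lborel ({0..L} \<union> {L<..}) h" using i1 i2 by (rule set_integrable_Un) auto
    moreover have "{0..L} \<union> {L<..} = {0::real..}" using L by auto
    ultimately show ?thesis by simp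
  qed
  show ?thesis using r hint hnn hmono hbound by blast
qed


lemma holo_param:
  fixes g :: "complex \<Rightarrow> complex" and e :: "real \<Rightarrow> complex" and S :: "complex set"
  assumes S: "open S" and Sadd: "\<And>\<xi> s. \<xi> \<in> S \<Longrightarrow> s \<ge> 0 \<Longrightarrow> \<xi> + of_real s \<in> S"
    and g: "g holomorphic_on S"
    and e: "continuous_on UNIV e" and eb: "\<And>s. s \<ge> 0 \<Longrightarrow> norm (e s) \<le> 1"
    and maj: "\<And>\<xi>0. \<xi>0 \<in> S \<Longrightarrow> \<exists>r>0. \<exists>h. cball \<xi>0 r \<subseteq> S \<and> set_integrable lborel {0..} h \<and>
                  (\<forall>\<zeta>\<in>cball \<xi>0 r. \<forall>s\<ge>0. norm (g (\<zeta> + of_real s)) \<le> h s)"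
  shows "(\<lambda>\<xi>. LINT s:{0..}|lborel. g (\<xi> + of_real s) * e s) holomorphic_on S"
proof -
  have gc: "continuous_on S g" by (rule holomorphic_on_imp_continuous_on[OF g])
  have dgc: "continuous_on S (deriv g)"
    by (rule holomorphic_on_imp_continuous_on[OF holomorphic_deriv[OF g S]])
  define F where "F = (\<lambda>\<xi>. LINT s:{0..}|lborel. g (\<xi> + of_real s) * e s)"
  have cont_int: "continuous_on A (\<lambda>s. g (x + of_real s) * e s)" if "x \<in> S" "A \<subseteq> {0..}" for x A
  proof -
    have "continuous_on A (\<lambda>s. g (x + of_real s))"
      by (rule continuous_on_compose2[OF gc]) (use that Sadd in \<open>auto intro!: continuous_intros\<close>)
    moreover have "continuous_on A e" by (rule continuous_on_subset[OF e]) auto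
    ultimately show ?thesis by (intro continuous_intros)
  qed
  have local: "F field_differentiable (at \<xi>0)" if xi0: "\<xi>0 \<in> S" for \<xi>0
  proof -
    obtain r h where r: "r > 0" "cball \<xi>0 r \<subseteq> S" "set_integrable lborel {0..} h"
      "\<forall>\<zeta>\<in>cball \<xi>0 r. \<forall>s\<ge>0. norm (g (\<zeta> + of_real s)) \<le> h s"
      using maj[OF xi0] by blast
    define Fb where "Fb = (\<lambda>(b::real) \<xi>. LINT s:{0..b}|lborel. g (\<xi> + of_real s) * e s)"
    have meas: "set_borel_measurable lborel {0..} (\<lambda>s. g (x + of_real s) * e s)" if "x \<in> cball \<xi>0 r" for x
    proof -
      have "continuous_on {0..} (\<lambda>s. g (x + of_real s) * e s)" using that r by (intro cont_int) auto
      then show ?thesis unfolding set_borel_measurable_def measurable_lborel2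
        by (intro borel_measurable_continuous_on_indicator) auto
    qed
    have bound: "norm (g (x + of_real y) * e y) \<le> h y" if "x \<in> cball \<xi>0 r" "y \<ge> 0" for x y
    proof -
      have "norm (g (x + of_real y) * e y) = norm (g (x + of_real y)) * norm (e y)" by (simp add: norm_mult)
      also have "\<dots> \<le> norm (g (x + of_real y))" by (rule mult_left_le) (use eb that in auto)
      also have "\<dots> \<le> h y" using r(4) that by auto
      finally show ?thesis .
    qed
    have ul: "uniform_limit (cball \<xi>0 r) Fb F at_top"
      unfolding Fb_def F_def case_prod_unfold
      by (rule uniform_limit_set_lebesgue_integral_at_top[where g=h]) (use bound r meas in auto)
    have ev: "eventually (\<lambda>b. continuous_on (cball \<xi>0 r) (Fb b) \<and> Fb b holomorphic_on ball \<xi>0 r) at_top"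
      using eventually_ge_at_top[of "0::real"]
    proof eventually_elim
      case (elim b)
      have eq: "integral (cbox 0 b) (\<lambda>s. g (x + of_real s) * e s) = Fb b x" if "x \<in> cball \<xi>0 r" for x
      proof -
        have "continuous_on {0..b} (\<lambda>s. g (x + of_real s) * e s)" using that r by (intro cont_int) auto
        then have "set_integrable lborel {0..b} (\<lambda>s. g (x + of_real s) * e s)"
          by (rule borel_integrable_atLeastAtMost')
        then show ?thesis by (simp add: Fb_def set_borel_integral_eq_integral)
      qed
      have "(\<lambda>x. integral (cbox 0 b) (\<lambda>s. g (x + of_real s) * e s)) holomorphic_on cball \<xi>0 r"
      proof (rule leibniz_rule_holomorphic[where fx="\<lambda>x s. deriv g (x + of_real s) * e s"])
        fix x t assume xt: "x \<in> cball \<xi>0 r" "t \<in> cbox 0 (b::real)"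
        then have xtS: "x + of_real t \<in> S" using Sadd r by auto
        have "(g has_field_derivative deriv g (x + of_real t)) (at (x + of_real t))"
          by (rule holomorphic_derivI[OF g S xtS])
        then have "((\<lambda>x. g (x + of_real t)) has_field_derivative deriv g (x + of_real t)) (at x)"
          by (simp add: DERIV_shift)
        then have "((\<lambda>x. g (x + of_real t) * e t) has_field_derivative deriv g (x + of_real t) * e t) (at x)"
          by (rule DERIV_cmult_right)
        then show "((\<lambda>x. g (x + of_real t) * e t) has_field_derivative deriv g (x + of_real t) * e t)
                   (at x within cball \<xi>0 r)"
          by (rule has_field_derivative_at_within)
      next
        fix x assume "x \<in> cball \<xi>0 r"
        then have "continuous_on (cbox 0 b) (\<lambda>s. g (x + of_real s) * e s)" using r by (intro cont_int) auto
        then show "(\<lambda>s. g (x + of_real s) * e s) integrable_on cbox 0 b" by (rule integrable_continuous)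
      next
        have "continuous_on (cball \<xi>0 r \<times> cbox 0 b) (\<lambda>p. deriv g (fst p + of_real (snd p)))"
          by (rule continuous_on_compose2[OF dgc]) (use r Sadd in \<open>auto intro!: continuous_intros\<close>)
        moreover have "continuous_on (cball \<xi>0 r \<times> cbox 0 b) (\<lambda>p. e (snd p))"
          by (rule continuous_on_compose2[OF e]) (auto intro!: continuous_intros)
        ultimately show "continuous_on (cball \<xi>0 r \<times> cbox 0 b) (\<lambda>(x, t). deriv g (x + of_real t) * e t)"
          unfolding case_prod_unfold by (intro continuous_intros)
      qed (rule convex_cball)
      then have hol: "Fb b holomorphic_on cball \<xi>0 r" by (rule holomorphic_transform) (rule eq)
      show ?case using hol holomorphic_on_imp_continuous_on holomorphic_on_subset[OF hol ball_subset_cball] by auto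
    qed
    have "F holomorphic_on ball \<xi>0 r"
      using holomorphic_uniform_limit[OF ev ul] by auto
    then show ?thesis using r(1) by (meson centre_in_ball holomorphic_on_imp_differentiable_at open_ball)
  qed
  show ?thesis unfolding F_def[symmetric] holomorphic_on_def using local field_differentiable_at_within by blast
qed


theorem lemma2p2:
  fixes q :: "complex \<Rightarrow> complex" and \<theta>0 \<gamma> k :: real
  assumes "0 < \<theta>0" and "\<theta>0 < pi"
    and "\<forall>x::real. x \<ge> 0 \<longrightarrow> q (of_real x) \<in> \<real>"
    and "q holomorphic_on sector \<theta>0"
    and "\<gamma> > 1"
    and "\<exists>R. \<forall>\<xi>\<in>sector \<theta>0. norm \<xi> \<ge> R \<longrightarrow> norm (q \<xi>) \<le> k * norm \<xi> powr (- \<gamma>)"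
  shows "\<forall>z. Im z > 0 \<longrightarrow> (\<forall>n. 
           (\<forall>\<xi>\<in>sector \<theta>0.
              norm (fst (W q z n \<xi>)) + norm (snd (W q z n \<xi>))
                \<le> (2 * (LINT s:{0..}|lborel. norm (Qf q z (\<xi> + of_real s)))) ^ n / fact n)
           \<and> (\<lambda>\<xi>. fst (W q z n \<xi>)) holomorphic_on sector \<theta>0
           \<and> (\<lambda>\<xi>. snd (W q z n \<xi>)) holomorphic_on sector \<theta>0)"
proof (rule allI, rule impI)
  fix z :: complex assume z: "Im z > 0"
  define S where "S = sector \<theta>0"
  have Sopen: "open S" unfolding S_def by (rule open_sector[OF assms(2)])
  have Sadd: "\<And>\<xi> s. \<xi> \<in> S \<Longrightarrow> s \<ge> 0 \<Longrightarrow> \<xi> + of_real s \<in> S"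
    unfolding S_def by (rule sector_add[OF assms(2)])
  have qh: "q holomorphic_on S" using assms(4) by (simp add: S_def)
  have qc: "continuous_on S q" by (rule holomorphic_on_imp_continuous_on[OF qh])
  obtain R where R: "\<forall>\<xi>\<in>sector \<theta>0. norm \<xi> \<ge> R \<longrightarrow> norm (q \<xi>) \<le> k * norm \<xi> powr (- \<gamma>)"
    using assms(6) by blast
  have maj: "\<exists>r>0. \<exists>h. cball \<xi>0 r \<subseteq> S \<and> set_integrable lborel {0..} h \<and> (\<forall>s. 0 \<le> h s)
     \<and> (\<forall>s t. 0 \<le> s \<longrightarrow> s \<le> t \<longrightarrow> h t \<le> h s)
     \<and> (\<forall>\<zeta>\<in>cball \<xi>0 r. \<forall>s\<ge>0. norm (q (\<zeta> + of_real s)) \<le> h s)" if "\<xi>0 \<in> S" for \<xi>0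
    using majorant[OF assms(1,2) qc[unfolded S_def] assms(5) R that[unfolded S_def]] unfolding S_def .
  have z0: "z \<noteq> 0" using z by auto
  have nz: "norm z > 0" using z0 by simp
  have normQ: "norm (Qf q z w) = norm (q w) / (2 * norm z)" for w
    by (simp add: Qf_def norm_mult norm_divide)
  have Qh: "Qf q z holomorphic_on S" unfolding Qf_def using z0 qh by (intro holomorphic_intros) auto
  have Qc: "continuous_on S (Qf q z)" by (rule holomorphic_on_imp_continuous_on[OF Qh])
  define E where "E = (\<lambda>s::real. exp (2 * \<i> * of_real s * z))"
  have E1: "norm (- E s) \<le> 1" if "s \<ge> 0" for s
  proof -
    have "Re (2 * \<i> * of_real s * z) = - 2 * s * Im z" by simp
    also have "\<dots> \<le> 0" using that z by (simp add: mult_nonneg_nonneg)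
    finally show ?thesis by (simp add: E_def norm_exp_eq_Re)
  qed
  have Ec: "continuous_on UNIV (\<lambda>s. - E s)" unfolding E_def by (intro continuous_intros)
  define u where "u = (\<lambda>n \<xi>. fst (W q z n \<xi>))"
  define v where "v = (\<lambda>n \<xi>. snd (W q z n \<xi>))"
  define Qn where "Qn = (\<lambda>\<xi>. LINT s:{0..}|lborel. norm (Qf q z (\<xi> + of_real s)))"
  have Qn_nn: "Qn \<xi> \<ge> 0" for \<xi>
    unfolding Qn_def set_lebesgue_integral_def by (intro Bochner_Integration.integral_nonneg) auto
  have aint: "set_integrable lborel {0..} (\<lambda>s. norm (Qf q z (\<xi> + of_real s)))" if xiS: "\<xi> \<in> S" for \<xi>
  proof -
    obtain r h where rh: "r > 0" "set_integrable lborel {0..} h" "\<forall>s. 0 \<le> h s"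
      "\<forall>\<zeta>\<in>cball \<xi> r. \<forall>s\<ge>0. norm (q (\<zeta> + of_real s)) \<le> h s"
      using maj[OF xiS] by blast
    have "set_integrable lborel {0..} (\<lambda>s. (1 / (2 * norm z)) * h s)" using rh(2) by simp
    moreover have "continuous_on {0..} (\<lambda>s. norm (Qf q z (\<xi> + of_real s)))"
      by (intro continuous_intros continuous_on_compose2[OF Qc]) (use Sadd xiS in auto)
    then have "set_borel_measurable lborel {0..} (\<lambda>s. norm (Qf q z (\<xi> + of_real s)))"
      unfolding set_borel_measurable_def measurable_lborel2
      by (intro borel_measurable_continuous_on_indicator) auto
    moreover have "AE s in lborel. s \<in> {0..} \<longrightarrow> norm (norm (Qf q z (\<xi> + of_real s))) \<le> norm ((1 / (2 * norm z)) * h s)"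
    proof (intro AE_I2 impI)
      fix s :: real assume "s \<in> {0..}"
      then have "norm (q (\<xi> + of_real s)) \<le> h s" using rh(1,4) by auto
      then show "norm (norm (Qf q z (\<xi> + of_real s))) \<le> norm ((1 / (2 * norm z)) * h s)"
        using rh(3) nz by (simp add: normQ divide_right_mono abs_of_nonneg)
    qed
    ultimately show ?thesis by (rule set_integrable_bound)
  qed
  have P: "(\<forall>\<xi>\<in>S. norm (u n \<xi>) + norm (v n \<xi>) \<le> (2 * Qn \<xi>) ^ n / fact n)
           \<and> u n holomorphic_on S \<and> v n holomorphic_on S" for n
  proof (induction n)
    case 0
    show ?case by (simp add: u_def v_def holomorphic_on_const)
  next
    case (Suc n)
    have IHb: "\<And>\<xi>. \<xi> \<in> S \<Longrightarrow> norm (u n \<xi>) + norm (v n \<xi>) \<le> (2 * Qn \<xi>) ^ n / fact n"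
      and IHu: "u n holomorphic_on S" and IHv: "v n holomorphic_on S" using Suc.IH by auto
    define g where "g = (\<lambda>\<zeta>. Qf q z \<zeta> * (u n \<zeta> + v n \<zeta>))"
    have gh: "g holomorphic_on S" unfolding g_def using Qh IHu IHv by (intro holomorphic_intros)
    have gc: "continuous_on S g" by (rule holomorphic_on_imp_continuous_on[OF gh])
    have gnorm: "norm (g \<zeta>) \<le> norm (Qf q z \<zeta>) * (norm (u n \<zeta>) + norm (v n \<zeta>))" for \<zeta>
      unfolding g_def norm_mult by (intro mult_left_mono norm_triangle_ineq) auto
    have ifst: "Qf q z (\<xi> + of_real s) * fst (Kmul s z (W q z n (\<xi> + of_real s))) = g (\<xi> + of_real s) * 1" for \<xi> s
      by (simp add: Kmul_def g_def u_def v_def)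
    have isnd: "Qf q z (\<xi> + of_real s) * snd (Kmul s z (W q z n (\<xi> + of_real s))) = g (\<xi> + of_real s) * (- E s)" for \<xi> s
      by (simp add: Kmul_def g_def u_def v_def E_def algebra_simps)
    have ueq: "u (Suc n) \<xi> = (LINT s:{0..}|lborel. g (\<xi> + of_real s) * 1)" for \<xi>
      unfolding u_def W.simps fst_conv ifst ..
    have veq: "v (Suc n) \<xi> = (LINT s:{0..}|lborel. g (\<xi> + of_real s) * (- E s))" for \<xi>
      unfolding v_def W.simps snd_conv isnd ..
    have bound: "norm (u (Suc n) \<xi>) + norm (v (Suc n) \<xi>) \<le> (2 * Qn \<xi>) ^ Suc n / fact (Suc n)" if xi: "\<xi> \<in> S" for \<xi>
    proof -
      define a where "a = (\<lambda>s. norm (Qf q z (\<xi> + of_real s)))"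
      define G where "G = (\<lambda>s. LINT t:{0..}|lborel. a (s + t))"
      have ac: "continuous_on {0..} a" unfolding a_def
        by (intro continuous_intros continuous_on_compose2[OF Qc]) (use Sadd xi in auto)
      have ai: "set_integrable lborel {0..} a" unfolding a_def by (rule aint[OF xi])
      have GQ: "G s = Qn (\<xi> + of_real s)" for s
        by (simp add: G_def Qn_def a_def add.assoc)
      have G0: "G 0 = Qn \<xi>" by (simp add: GQ)
      have ann: "\<And>t. 0 \<le> t \<Longrightarrow> 0 \<le> a t" by (simp add: a_def)
      note KI = key_int[OF ac ann ai, of n]
      define B where "B = (\<lambda>s. 2 * a s * (2 * G s)^n / fact n)"
      have Bi: "set_integrable lborel {0..} B" unfolding B_def G_def by (rule KI(1))
      have BI: "(LINT s:{0..}|lborel. B s) = (2 * G 0)^(Suc n) / fact (Suc n)" unfolding B_def G_def by (rule KI(2))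
      have Bnn: "B s \<ge> 0" for s unfolding B_def a_def GQ using Qn_nn by simp
      have pw: "norm (g (\<xi> + of_real s) * 1) + norm (g (\<xi> + of_real s) * (- E s)) \<le> B s" if s: "s \<ge> 0" for s
      proof -
        have "norm (g (\<xi> + of_real s) * (- E s)) \<le> norm (g (\<xi> + of_real s))"
          unfolding norm_mult by (rule mult_left_le) (use E1[OF s] in auto)
        then have "norm (g (\<xi> + of_real s) * 1) + norm (g (\<xi> + of_real s) * (- E s)) \<le> 2 * norm (g (\<xi> + of_real s))"
          by simp
        also have "\<dots> \<le> 2 * (a s * (norm (u n (\<xi> + of_real s)) + norm (v n (\<xi> + of_real s))))"
          using gnorm[of "\<xi> + of_real s"] by (simp add: a_def)
        also have "\<dots> \<le> 2 * (a s * ((2 * Qn (\<xi> + of_real s)) ^ n / fact n))"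
          using IHb[OF Sadd[OF xi s]] by (intro mult_left_mono) (auto simp: a_def)
        also have "\<dots> = B s" by (simp add: B_def GQ)
        finally show ?thesis .
      qed
      have meas1: "set_borel_measurable lborel {0..} (\<lambda>s. g (\<xi> + of_real s) * c s)" if "continuous_on UNIV c" for c
      proof -
        have "continuous_on {0..} (\<lambda>s. g (\<xi> + of_real s) * c s)"
          by (intro continuous_intros continuous_on_compose2[OF gc] continuous_on_subset[OF that])
             (use Sadd xi in auto)
        then show ?thesis unfolding set_borel_measurable_def measurable_lborel2
          by (intro borel_measurable_continuous_on_indicator) auto
      qed
      have i1: "set_integrable lborel {0..} (\<lambda>s. g (\<xi> + of_real s) * 1)"
      proof (rule set_integrable_bound[OF Bi meas1])
        show "AE s in lborel. s \<in> {0..} \<longrightarrow> norm (g (\<xi> + of_real s) * 1) \<le> norm (B s)"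
          using pw Bnn by (intro AE_I2) (smt (verit) atLeast_iff norm_ge_zero real_norm_def)
      qed (intro continuous_intros)
      have i2: "set_integrable lborel {0..} (\<lambda>s. g (\<xi> + of_real s) * (- E s))"
      proof (rule set_integrable_bound[OF Bi meas1[OF Ec]])
        show "AE s in lborel. s \<in> {0..} \<longrightarrow> norm (g (\<xi> + of_real s) * (- E s)) \<le> norm (B s)"
          using pw Bnn by (intro AE_I2) (smt (verit) atLeast_iff norm_ge_zero real_norm_def)
      qed
      have isum: "set_integrable lborel {0..} (\<lambda>s. norm (g (\<xi> + of_real s) * 1) + norm (g (\<xi> + of_real s) * (- E s)))"
        by (intro set_integral_add(1) set_integrable_norm i1 i2)
      have "norm (u (Suc n) \<xi>) + norm (v (Suc n) \<xi>)
          \<le> (LINT s:{0..}|lborel. norm (g (\<xi> + of_real s) * 1)) + (LINT s:{0..}|lborel. norm (g (\<xi> + of_real s) * (- E s)))"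
        unfolding ueq veq by (intro add_mono set_integral_norm_bound i1 i2)
      also have "\<dots> = (LINT s:{0..}|lborel. norm (g (\<xi> + of_real s) * 1) + norm (g (\<xi> + of_real s) * (- E s)))"
        by (rule set_integral_add(2)[symmetric]) (intro set_integrable_norm i1 i2)+
      also have "\<dots> \<le> (LINT s:{0..}|lborel. B s)"
        by (rule set_integral_mono[OF isum Bi]) (use pw in auto)
      also have "\<dots> = (2 * Qn \<xi>) ^ Suc n / fact (Suc n)" unfolding BI G0 ..
      finally show ?thesis .
    qed
    have gmaj: "\<exists>r>0. \<exists>h. cball \<xi>0 r \<subseteq> S \<and> set_integrable lborel {0..} h \<and>
                  (\<forall>\<zeta>\<in>cball \<xi>0 r. \<forall>s\<ge>0. norm (g (\<zeta> + of_real s)) \<le> h s)" if xi0: "\<xi>0 \<in> S" for \<xi>0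
    proof -
      obtain r h where rh: "r > 0" "cball \<xi>0 r \<subseteq> S" "set_integrable lborel {0..} h" "\<forall>s. 0 \<le> h s"
        "\<forall>s t. 0 \<le> s \<longrightarrow> s \<le> t \<longrightarrow> h t \<le> h s"
        "\<forall>\<zeta>\<in>cball \<xi>0 r. \<forall>s\<ge>0. norm (q (\<zeta> + of_real s)) \<le> h s"
        using maj[OF xi0] by blast
      define M0 where "M0 = (LINT t:{0..}|lborel. (1 / (2 * norm z)) * h t)"
      define K where "K = (2 * M0) ^ n / fact n"
      have hi: "set_integrable lborel {0..} (\<lambda>t. (1 / (2 * norm z)) * h t)" using rh(3) by simp
      have QnM: "Qn (\<zeta> + of_real s) \<le> M0" if "\<zeta> \<in> cball \<xi>0 r" "s \<ge> 0" for \<zeta> s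
      proof -
        have zs: "\<zeta> + of_real s \<in> S" using that rh(2) Sadd by auto
        show ?thesis unfolding Qn_def M0_def
        proof (rule set_integral_mono[OF aint[OF zs] hi])
          fix t :: real assume t: "t \<in> {0..}"
          have "norm (q (\<zeta> + of_real (s + t))) \<le> h (s + t)" by (rule rh(6)[rule_format]) (use that t in auto)
          also have "\<dots> \<le> h t" using rh(5) that t by auto
          finally have "norm (q (\<zeta> + of_real s + of_real t)) \<le> h t" by (simp add: add.assoc)
          then show "norm (Qf q z (\<zeta> + of_real s + of_real t)) \<le> (1 / (2 * norm z)) * h t"
            using nz by (simp add: normQ divide_right_mono)
        qed
      qed
      have K: "K \<ge> 0" unfolding K_def M0_def set_lebesgue_integral_def
        using rh(4) nz by (intro divide_nonneg_pos zero_le_power mult_nonneg_nonneg Bochner_Integration.integral_nonneg) auto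
      have "set_integrable lborel {0..} (\<lambda>s. K * ((1 / (2 * norm z)) * h s))" by (rule set_integrable_mult_right) (rule hi)
      moreover have "\<forall>\<zeta>\<in>cball \<xi>0 r. \<forall>s\<ge>0. norm (g (\<zeta> + of_real s)) \<le> K * ((1 / (2 * norm z)) * h s)"
      proof (intro ballI allI impI)
        fix \<zeta> s assume zs: "\<zeta> \<in> cball \<xi>0 r" "(s::real) \<ge> 0"
        have zsS: "\<zeta> + of_real s \<in> S" using zs rh(2) Sadd by auto
        have "norm (g (\<zeta> + of_real s)) \<le> norm (Qf q z (\<zeta> + of_real s)) * ((2 * Qn (\<zeta> + of_real s)) ^ n / fact n)"
          using gnorm[of "\<zeta> + of_real s"] IHb[OF zsS]
          by (meson mult_left_mono norm_ge_zero order_trans)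
        also have "\<dots> \<le> ((1 / (2 * norm z)) * h s) * K"
        proof (rule mult_mono)
          show "norm (Qf q z (\<zeta> + of_real s)) \<le> (1 / (2 * norm z)) * h s"
            using rh(6) zs nz by (simp add: normQ divide_right_mono)
          show "(2 * Qn (\<zeta> + of_real s)) ^ n / fact n \<le> K"
            unfolding K_def using QnM[OF zs] Qn_nn
            by (intro divide_right_mono power_mono) auto
        qed (use rh(4) nz Qn_nn[of "\<zeta> + of_real s"] in auto)
        finally show "norm (g (\<zeta> + of_real s)) \<le> K * ((1 / (2 * norm z)) * h s)" by (simp add: mult.commute)
      qed
      ultimately show ?thesis using rh(1,2) by blast
    qed
    have uh: "u (Suc n) holomorphic_on S"
    proof -
      have "(\<lambda>\<xi>. LINT s:{0..}|lborel. g (\<xi> + of_real s) * 1) holomorphic_on S"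
        by (rule holo_param[OF Sopen Sadd gh _ _ gmaj]) auto
      moreover have "u (Suc n) = (\<lambda>\<xi>. LINT s:{0..}|lborel. g (\<xi> + of_real s) * 1)" using ueq by auto
      ultimately show ?thesis by simp
    qed
    have vh: "v (Suc n) holomorphic_on S"
    proof -
      have "(\<lambda>\<xi>. LINT s:{0..}|lborel. g (\<xi> + of_real s) * (- E s)) holomorphic_on S"
        by (rule holo_param[OF Sopen Sadd gh Ec E1 gmaj])
      moreover have "v (Suc n) = (\<lambda>\<xi>. LINT s:{0..}|lborel. g (\<xi> + of_real s) * (- E s))" using veq by auto
      ultimately show ?thesis by simp
    qed
    show ?case using bound uh vh by auto
  qed
  show "\<forall>n. (\<forall>\<xi>\<in>sector \<theta>0.
              norm (fst (W q z n \<xi>)) + norm (snd (W q z n \<xi>))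
                \<le> (2 * (LINT s:{0..}|lborel. norm (Qf q z (\<xi> + of_real s)))) ^ n / fact n)
           \<and> (\<lambda>\<xi>. fst (W q z n \<xi>)) holomorphic_on sector \<theta>0
           \<and> (\<lambda>\<xi>. snd (W q z n \<xi>)) holomorphic_on sector \<theta>0"
    using P unfolding u_def v_def Qn_def S_def by blast
qed


end
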